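(* For the prism $Y_n=C_n\square P_2$ with $n\ge 3$: $IDI(Y_n)=2$ if $n\ge 6$, and $IDI(Y_3)=IDI(Y_4)=IDI(Y_5)=3$.
   Context: $C_n$ is the cycle on $n$ vertices, $P_2$ the path on two vertices, and $\square$ the Cartesian product. For a finite simple connected graph $G=(V,E)$ with diameter $d$, a rank assignment is a function $f:V\to\mathbb{R}$; under $f$, the string of a vertex $v$ is the $d$-vector whose $i$-th coordinate is the sum of $f(w)$ over all vertices $w$ with $d(v,w)=i$. The ID-index $IDI(G)$ is the minimum $k$ such that there exists $f:V\to\mathbb{R}$ with $|f(V)|=k$ under which all vertices have distinct strings. *)

theory Defs
  imports Main "HOL.Real"
begin

type_synonym 'a graph = "'a set \<times> ('a \<Rightarrow> 'a \<Rightarrow> bool)"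

definition verts :: "'a graph \<Rightarrow> 'a set" where "verts G = fst G"
definition adj :: "'a graph \<Rightarrow> 'a \<Rightarrow> 'a \<Rightarrow> bool" where
  "adj G u v = (u \<in> verts G \<and> v \<in> verts G \<and> snd G u v)"

definition gdist :: "'a graph \<Rightarrow> 'a \<Rightarrow> 'a \<Rightarrow> nat" where
  "gdist G u v = (LEAST k. ((adj G) ^^ k) u v)"

definition diameter :: "'a graph \<Rightarrow> nat" where
  "diameter G = Max {gdist G u v | u v. u \<in> verts G \<and> v \<in> verts G}"

definition vstring :: "'a graph \<Rightarrow> ('a \<Rightarrow> real) \<Rightarrow> 'a \<Rightarrow> real list" where
  "vstring G f v = map (\<lambda>i. \<Sum>w\<in>{w \<in> verts G. gdist G v w = i}. f w) [1..<diameter G + 1]"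

definition IDI :: "'a graph \<Rightarrow> nat" where
  "IDI G = (LEAST k. \<exists>f :: 'a \<Rightarrow> real. card (f ` verts G) = k \<and> inj_on (vstring G f) (verts G))"

definition cycle_graph :: "nat \<Rightarrow> nat graph" where
  "cycle_graph n = ({0..<n}, \<lambda>i j. j = (i + 1) mod n \<or> i = (j + 1) mod n)"

definition path_graph :: "nat \<Rightarrow> nat graph" where
  "path_graph n = ({0..<n}, \<lambda>i j. j = i + 1 \<or> i = j + 1)"

definition cart_prod :: "'a graph \<Rightarrow> 'b graph \<Rightarrow> ('a \<times> 'b) graph" where
  "cart_prod G H = (verts G \<times> verts H,
     \<lambda>(u1, u2) (v1, v2). (u1 = v1 \<and> adj H u2 v2) \<or> (u2 = v2 \<and> adj G u1 v1))"

definition prism :: "nat \<Rightarrow> (nat \<times> nat) graph" where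
  "prism n = cart_prod (cycle_graph n) (path_graph 2)"

end

theory Submission
  imports Defs
begin

definition cd :: "nat \<Rightarrow> nat \<Rightarrow> nat \<Rightarrow> nat" where
  "cd n i j = (if i \<le> j then min (j-i) (n-(j-i)) else min (i-j) (n-(i-j)))"

definition dd :: "nat \<Rightarrow> nat\<times>nat \<Rightarrow> nat\<times>nat \<Rightarrow> nat" where
  "dd n u v = cd n (fst u) (fst v) + (if snd u = snd v then 0 else 1)"

lemma verts_prism: "verts (prism n) = {0..<n} \<times> {0..<2}"
  by (simp add: prism_def cart_prod_def verts_def cycle_graph_def path_graph_def)

lemma adj_prism: "adj (prism n) (i,a) (j,b) \<longleftrightarrow> i<n \<and> j<n \<and> a<2 \<and> b<2 \<and>
   ((i=j \<and> (b=a+1 \<or> a=b+1)) \<or> (a=b \<and> (j=(i+1) mod n \<or> i=(j+1) mod n)))"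
  by (auto simp add: prism_def cart_prod_def adj_def verts_def cycle_graph_def path_graph_def)

lemma cd_step:
  assumes "i<n" "j<n" "j'<n" "j' = (j+1) mod n \<or> j = (j'+1) mod n"
  shows "cd n i j' \<le> cd n i j + 1"
proof -
  have m1: "(j+1) mod n = (if j+1 = n then 0 else j+1)" using assms by auto
  have m2: "(j'+1) mod n = (if j'+1 = n then 0 else j'+1)" using assms by auto
  show ?thesis using assms(4) unfolding m1 m2 cd_def using assms(1-3)
    by (auto split: if_splits)
qed

lemma cd_self[simp]: "cd n i i = 0" by (simp add: cd_def)

lemma dist_lower:
  assumes "((adj (prism n)) ^^ k) u v" "u \<in> verts (prism n)"
  shows "dd n u v \<le> k"
  using assms(1)
proof (induction k arbitrary: v)
  case 0
  then show ?case by (simp add: dd_def)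
next
  case (Suc k)
  from Suc.prems obtain y where y: "((adj (prism n)) ^^ k) u y" "adj (prism n) y v"
    by (auto elim: relpowp_Suc_E)
  have IH: "dd n u y \<le> k" using Suc.IH y(1) .
  obtain i a where u: "u = (i,a)" by force
  obtain j b where yy: "y = (j,b)" by force
  obtain j' b' where vv: "v = (j',b')" by force
  have ui: "i < n" "a < 2" using assms(2) u by (auto simp: verts_prism)
  from y(2) have A: "j<n \<and> j'<n \<and> b<2 \<and> b'<2 \<and>
   ((j=j' \<and> (b'=b+1 \<or> b=b'+1)) \<or> (b=b' \<and> (j'=(j+1) mod n \<or> j=(j'+1) mod n)))"
    unfolding yy vv adj_prism by simp
  show ?case
  proof (cases "j=j'")
    case True
    then show ?thesis using IH A ui unfolding dd_def u yy vv by auto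
  next
    case False
    then have "cd n i j' \<le> cd n i j + 1" "b = b'" using A ui cd_step[of i n j j'] by auto
    then show ?thesis using IH unfolding dd_def u yy vv by auto
  qed
qed

lemma relpowp_sym:
  assumes "\<And>x y. R x y \<Longrightarrow> R y x" "(R ^^ k) x y"
  shows "(R ^^ k) y x"
  using assms(2)
proof (induction k arbitrary: y)
  case 0 then show ?case by simp
next
  case (Suc k)
  then obtain z where "(R ^^ k) x z" "R z y" by (auto elim: relpowp_Suc_E)
  then show ?case using Suc.IH assms(1) relpowp_Suc_I2 by metis
qed

lemma walk_fwd:
  assumes "i < n" "a < 2"
  shows "((adj (prism n)) ^^ m) (i,a) ((i+m) mod n, a)"
proof (induction m)
  case 0 then show ?case using assms by simp
next
  case (Suc m)
  have "adj (prism n) ((i+m) mod n, a) ((i + Suc m) mod n, a)"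
    unfolding adj_prism using assms by (simp add: mod_Suc_eq)
  then show ?case using Suc relpowp_Suc_I by metis
qed

lemma adj_prism_sym: "adj (prism n) x y \<Longrightarrow> adj (prism n) y x"
  by (cases x; cases y) (auto simp: adj_prism)

lemma walk_layer:
  assumes "i < n" "j < n" "a < 2"
  shows "((adj (prism n)) ^^ (cd n i j)) (i,a) (j,a)"
proof -
  have f: "((adj (prism n)) ^^ ((j + n - i) mod n)) (i,a) (j,a)"
  proof -
    have "(i + (j + n - i) mod n) mod n = j" using assms
      by (simp add: mod_add_right_eq)
    then show ?thesis using walk_fwd[OF assms(1,3), of "(j + n - i) mod n"] by simp
  qed
  have b: "((adj (prism n)) ^^ ((i + n - j) mod n)) (j,a) (i,a)"
  proof -
    have "(j + (i + n - j) mod n) mod n = i" using assms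
      by (simp add: mod_add_right_eq)
    then show ?thesis using walk_fwd[OF assms(2,3), of "(i + n - j) mod n"] by simp
  qed
  have b': "((adj (prism n)) ^^ ((i + n - j) mod n)) (i,a) (j,a)"
    using relpowp_sym[OF _ b] adj_prism_sym by blast
  show ?thesis
  proof (cases "i \<le> j")
    case True
    have h: "j + n - i = (j - i) + n" using True by simp
    have h2: "(j - i + n) mod n = j - i" using assms by simp
    have e1: "(j + n - i) mod n = j - i" using h h2 by metis
    have e2: "(i + n - j) mod n = (if i = j then 0 else n - (j - i))" using True assms
      by auto
    show ?thesis using f b' True unfolding cd_def e1 e2 by (cases "i=j") (auto simp: min_def)
  next
    case False
    have h: "i + n - j = (i - j) + n" using False by simp
    have h2: "(i - j + n) mod n = i - j" using assms by simp
    have e1: "(i + n - j) mod n = i - j" using h h2 by metis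
    have e2: "(j + n - i) mod n = n - (i - j)" using False assms by auto
    show ?thesis using f b' False unfolding cd_def e1 e2 by (auto simp: min_def)
  qed
qed

lemma gdist_prism:
  assumes "u \<in> verts (prism n)" "v \<in> verts (prism n)"
  shows "gdist (prism n) u v = dd n u v"
proof -
  obtain i a where u: "u = (i,a)" by force
  obtain j b where v: "v = (j,b)" by force
  have ui: "i < n" "a < 2" "j < n" "b < 2" using assms u v by (auto simp: verts_prism)
  have w: "((adj (prism n)) ^^ (dd n u v)) u v"
  proof (cases "a = b")
    case True
    then show ?thesis using walk_layer[of i n j a] ui unfolding u v dd_def by simp
  next
    case False
    have "((adj (prism n)) ^^ (cd n i j)) (i,a) (j,a)" using walk_layer[of i n j a] ui by simp
    moreover have "adj (prism n) (j,a) (j,b)" using ui False unfolding adj_prism by auto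
    ultimately have "((adj (prism n)) ^^ Suc (cd n i j)) (i,a) (j,b)" by (rule relpowp_Suc_I)
    then show ?thesis using False unfolding u v dd_def by simp
  qed
  show ?thesis unfolding gdist_def
  proof (rule Least_equality)
    show "((adj (prism n)) ^^ (dd n u v)) u v" by (rule w)
  next
    fix y assume "((adj (prism n)) ^^ y) u v"
    then show "dd n u v \<le> y" using dist_lower assms(1) by blast
  qed
qed

lemma min_half: "min d (n - d) \<le> (n::nat) div 2"
  by (simp add: min_def) presburger

lemma cd_le: "cd n i j \<le> n div 2"
proof (cases "i \<le> j")
  case True
  show ?thesis unfolding cd_def if_P[OF True] by (rule min_half)
next
  case False
  show ?thesis unfolding cd_def if_not_P[OF False] by (rule min_half)
qed

lemma diameter_prism:
  assumes "n \<ge> 3"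
  shows "diameter (prism n) = n div 2 + 1"
proof -
  let ?V = "verts (prism n)"
  have eq: "{gdist (prism n) u v | u v. u \<in> ?V \<and> v \<in> ?V} = (\<lambda>(u,v). dd n u v) ` (?V \<times> ?V)"
  proof (rule set_eqI)
    fix x
    show "x \<in> {gdist (prism n) u v | u v. u \<in> ?V \<and> v \<in> ?V} \<longleftrightarrow> x \<in> (\<lambda>(u,v). dd n u v) ` (?V \<times> ?V)"
    proof
      assume "x \<in> {gdist (prism n) u v | u v. u \<in> ?V \<and> v \<in> ?V}"
      then obtain u v where "x = gdist (prism n) u v" "u \<in> ?V" "v \<in> ?V" by blast
      then show "x \<in> (\<lambda>(u,v). dd n u v) ` (?V \<times> ?V)"
        using gdist_prism[of u n v] by (intro image_eqI[where x="(u,v)"]) auto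
    next
      assume "x \<in> (\<lambda>(u,v). dd n u v) ` (?V \<times> ?V)"
      then obtain u v where "x = dd n u v" "u \<in> ?V" "v \<in> ?V" by auto
      then have "x = gdist (prism n) u v" using gdist_prism[of u n v] by simp
      then show "x \<in> {gdist (prism n) u v | u v. u \<in> ?V \<and> v \<in> ?V}"
        using \<open>u \<in> ?V\<close> \<open>v \<in> ?V\<close> by blast
    qed
  qed
  have fin: "finite (?V \<times> ?V)" by (simp add: verts_prism)
  have le: "\<And>x. x \<in> (\<lambda>(u,v). dd n u v) ` (?V \<times> ?V) \<Longrightarrow> x \<le> n div 2 + 1"
  proof -
    fix x assume "x \<in> (\<lambda>(u,v). dd n u v) ` (?V \<times> ?V)"
    then obtain u v where "x = dd n u v" by auto
    then show "x \<le> n div 2 + 1" using cd_le[of n "fst u" "fst v"] unfolding dd_def by simp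
  qed
  have "n div 2 \<le> n - n div 2" by simp
  then have c: "cd n 0 (n div 2) = n div 2" unfolding cd_def by (simp add: min_def)
  have lt: "n div 2 < n" using assms by simp
  have mem: "n div 2 + 1 \<in> (\<lambda>(u,v). dd n u v) ` (?V \<times> ?V)"
    apply (rule image_eqI[where x="((0,0),(n div 2, 1))"])
    using lt c by (simp_all add: dd_def verts_prism)
  show ?thesis unfolding diameter_def eq
  proof (rule Max_eqI)
    show "finite ((\<lambda>(u,v). dd n u v) ` (?V \<times> ?V))" using fin by simp
  qed (use le mem in auto)
qed

definition rho :: "nat \<Rightarrow> nat \<Rightarrow> nat" where
  "rho n m = (if m = 0 then 1 else if 2*m < n then 2 else if 2*m = n then 1 else 0)"

lemma cd_le_case: "i \<le> j \<Longrightarrow> cd n i j = min (j-i) (n-(j-i))" by (simp add: cd_def)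
lemma cd_gt_case: "\<not> i \<le> j \<Longrightarrow> cd n i j = min (i-j) (n-(i-j))" by (simp add: cd_def)

lemma cd_A:
  assumes "i < n" "2*m \<le> n"
  shows "cd n i (if i+m<n then i+m else i+m-n) = m"
proof (cases "i+m<n")
  case True
  have "min m (n - m) = m" using assms by simp
  then show ?thesis using True cd_le_case[of i "i+m" n] by simp
next
  case False
  have le: "\<not> i \<le> i+m-n" using False assms by arith
  have e: "i - (i+m-n) = n - m" using False assms by arith
  have "min (n-m) (n - (n - m)) = m" using assms by simp
  then show ?thesis using False cd_gt_case[OF le, of n] e by simp
qed

lemma cd_B:
  assumes "i < n" "2*m \<le> n"
  shows "cd n i (if m \<le> i then i-m else i+n-m) = m"
proof (cases "m \<le> i")
  case True
  have le: "\<not> i \<le> i - m \<or> m = 0" using True by arith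
  then show ?thesis
  proof
    assume le: "\<not> i \<le> i - m"
    have e: "i - (i - m) = m" using True by arith
    have "min m (n - m) = m" using assms by simp
    then show ?thesis using True cd_gt_case[OF le, of n] e by simp
  next
    assume "m = 0" then show ?thesis by simp
  qed
next
  case False
  have le: "i \<le> i+n-m" using False assms by arith
  have e: "i+n-m - i = n - m" using False assms by arith
  have "min (n-m) (n - (n - m)) = m" using assms by simp
  then show ?thesis using False cd_le_case[OF le, of n] e by simp
qed

lemma min_eq_cases: "min a b = (m::nat) \<Longrightarrow> a = m \<or> b = m" by (cases "a \<le> b") (simp_all add: min_def)

lemma cd_inv:
  assumes "i < n" "j < n" "cd n i j = m"
  shows "j = (if i+m<n then i+m else i+m-n) \<or> j = (if m \<le> i then i-m else i+n-m)"
proof (cases "i \<le> j")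
  case True
  have "min (j-i) (n-(j-i)) = m" using True assms cd_le_case[OF True, of n] by simp
  then have "j - i = m \<or> n - (j-i) = m" by (rule min_eq_cases)
  then show ?thesis
  proof
    assume h: "j - i = m"
    have "i+m<n" "j = i+m" using h True assms by linarith+
    then show ?thesis by simp
  next
    assume h: "n - (j-i) = m"
    have "\<not> m \<le> i" "j = i+n-m" using h True assms by linarith+
    then show ?thesis by simp
  qed
next
  case False
  have "min (i-j) (n-(i-j)) = m" using False assms cd_gt_case[OF False, of n] by simp
  then have "i - j = m \<or> n - (i-j) = m" by (rule min_eq_cases)
  then show ?thesis
  proof
    assume h: "i - j = m"
    have "m \<le> i" "j = i-m" using h False assms by linarith+
    then show ?thesis by simp
  next
    assume h: "n - (i-j) = m"
    have "\<not> i+m<n" "j = i+m-n" using h False assms by linarith+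
    then show ?thesis by simp
  qed
qed

lemma cd_set:
  assumes "i < n" "2*m \<le> n"
  shows "{j. j < n \<and> cd n i j = m} = {if i+m<n then i+m else i+m-n, if m \<le> i then i-m else i+n-m}"
proof -
  have "m < n" using assms by linarith
  have A: "(if i+m<n then i+m else i+m-n) < n" using assms \<open>m < n\<close> by auto
  have B: "(if m \<le> i then i-m else i+n-m) < n" using assms by auto
  show ?thesis
  proof (rule set_eqI)
    fix j
    show "j \<in> {j. j < n \<and> cd n i j = m} \<longleftrightarrow> j \<in> {if i+m<n then i+m else i+m-n, if m \<le> i then i-m else i+n-m}"
      using cd_inv[OF assms(1), of j m] cd_A[OF assms] cd_B[OF assms] A B by auto
  qed
qed

lemma card_cd:
  assumes "i < n"
  shows "card {j. j < n \<and> cd n i j = m} = rho n m"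
proof (cases "2*m \<le> n")
  case True
  note S = cd_set[OF assms True]
  show ?thesis
  proof (cases "m = 0")
    case True
    then show ?thesis unfolding S rho_def using assms by simp
  next
    case m0: False
    show ?thesis
    proof (cases "2*m = n")
      case True
      have "(if i+m<n then i+m else i+m-n) = (if m \<le> i then i-m else i+n-m)"
        using True assms by auto
      then show ?thesis unfolding S rho_def using m0 True by simp
    next
      case False
      have "(if i+m<n then i+m else i+m-n) \<noteq> (if m \<le> i then i-m else i+n-m)"
        using False \<open>2*m \<le> n\<close> m0 assms by auto
      then show ?thesis unfolding S rho_def using m0 False \<open>2*m \<le> n\<close> by simp
    qed
  qed
next
  case False
  have "\<And>j. cd n i j \<noteq> m"
  proof
    fix j assume "cd n i j = m"
    then show False using cd_le[of n i j] False by linarith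
  qed
  then have "{j. j < n \<and> cd n i j = m} = {}" by blast
  then show ?thesis using False unfolding rho_def by auto
qed

definition rhoi :: "int \<Rightarrow> int \<Rightarrow> int" where
  "rhoi n t = (if t = 0 then 1 else if 2*t < n then 2 else if 2*t = n then 1 else 0)"

definition ci :: "int \<Rightarrow> int \<Rightarrow> int" where "ci n i = min i (n - i)"
definition ci2 :: "int \<Rightarrow> int \<Rightarrow> int" where "ci2 n i = (if i \<le> 2 then 2 - i else min (i-2) (n+2-i))"

definition Fv :: "int \<Rightarrow> int \<Rightarrow> int \<Rightarrow> int \<Rightarrow> int" where
  "Fv n i a k = (if a = 1 then rhoi n k else rhoi n (k-1))
     + (if ci n i + a = k then 1 else 0) - (if ci2 n i + 1 - a = k then 1 else 0)"

lemma key_layers: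
  fixes n i j m :: int
  assumes n: "n \<ge> 7" "n = 2*m \<or> n = 2*m+1"
    and ij: "0 \<le> i" "i < n" "0 \<le> j" "j < n"
    and H: "\<And>k. 1 \<le> k \<Longrightarrow> k \<le> m+1 \<Longrightarrow> Fv n i 0 k = Fv n j 1 k"
  shows False
proof -
  define xv where "xv = ci n i"
  define yv where "yv = ci2 n i + 1"
  define xw where "xw = ci n j + 1"
  define yw where "yw = ci2 n j"
  have b: "0 \<le> xv" "xv \<le> m" "1 \<le> yv" "yv \<le> m+1" "1 \<le> xw" "xw \<le> m+1" "0 \<le> yw" "yw \<le> m"
    using n ij unfolding xv_def yv_def xw_def yw_def ci_def ci2_def by auto
  have z1: "xv = 0 \<Longrightarrow> yv = 3" using n ij unfolding xv_def yv_def ci_def ci2_def by auto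
  have z2: "yw = 0 \<Longrightarrow> xw = 3" using n ij unfolding xw_def yw_def ci_def ci2_def by (auto simp: min_def split: if_splits)
  have F: "\<And>k. 1 \<le> k \<Longrightarrow> k \<le> m+1 \<Longrightarrow> rhoi n (k-1) + (if xv = k then 1 else 0) - (if yv = k then 1 else 0)
      = rhoi n k + (if xw = k then 1 else 0) - (if yw = k then 1 else 0)"
    using H unfolding Fv_def xv_def yv_def xw_def yw_def by simp
  have dl: "\<And>k. 1 \<le> k \<Longrightarrow> k \<le> m+1 \<Longrightarrow> rhoi n (k-1) - rhoi n k =
     (if k = 1 then -1 else if k = m+1 then (if n = 2*m then 1 else 2) else if k = m \<and> n = 2*m then 1 else 0)"
    using n unfolding rhoi_def by auto
  have G: "\<And>k. 1 \<le> k \<Longrightarrow> k \<le> m+1 \<Longrightarrow> (if xv = k then 1 else 0) - (if yv = k then 1 else 0) - (if xw = k then 1 else 0) + (if yw = k then 1 else 0) =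
     - (if k = 1 then -1 else if k = m+1 then (if n = 2*m then 1 else 2) else if k = m \<and> n = 2*m then 1 else (0::int))"
  proof -
    fix k :: int assume k: "1 \<le> k" "k \<le> m+1"
    show "?thesis k" using F[OF k] dl[OF k] by linarith
  qed
  note F1 = G[of 1] and F2 = G[of m] and F3 = G[of "m+1"] and F4 = G[of xv] and F5 = G[of yv]
    and F6 = G[of xw] and F7 = G[of yw] and F8 = G[of 3]
  show False using F1 F2 F3 F4 F5 F6 F7 F8 b z1 z2 n
    by smt
qed

lemma C1:
  fixes n i j :: int
  assumes "n \<ge> 7" "0 \<le> i" "i < n" "0 \<le> j" "j < n" "ci n i = ci n j" "ci2 n i = ci2 n j"
  shows "i = j"
  using assms unfolding ci_def ci2_def by (auto simp: min_def split: if_splits)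

lemma C2:
  fixes n i j a :: int
  assumes "n \<ge> 7" "0 \<le> i" "i < n" "0 \<le> j" "j < n" "a = 0 \<or> a = 1"
    "ci n i + a = ci2 n i + 1 - a" "ci n j + a = ci2 n j + 1 - a"
  shows "i = j"
  using assms unfolding ci_def ci2_def min_def by presburger

lemma key_same:
  fixes n i j m a :: int
  assumes n: "n \<ge> 7" "n = 2*m \<or> n = 2*m+1"
    and ij: "0 \<le> i" "i < n" "0 \<le> j" "j < n" and a: "a = 0 \<or> a = 1"
    and H: "\<And>k. 1 \<le> k \<Longrightarrow> k \<le> m+1 \<Longrightarrow> Fv n i a k = Fv n j a k"
  shows "i = j"
proof -
  define xv where "xv = ci n i + a"
  define yv where "yv = ci2 n i + 1 - a"
  define xw where "xw = ci n j + a"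
  define yw where "yw = ci2 n j + 1 - a"
  have b: "0 \<le> xv" "xv \<le> m+1" "0 \<le> yv" "yv \<le> m+1" "0 \<le> xw" "xw \<le> m+1" "0 \<le> yw" "yw \<le> m+1"
    using n ij a unfolding xv_def yv_def xw_def yw_def ci_def ci2_def by auto
  have z1: "xv = 0 \<Longrightarrow> yv = 3" "yv = 0 \<Longrightarrow> xv = 3"
    using n ij a unfolding xv_def yv_def ci_def ci2_def by (auto simp: min_def split: if_splits)
  have z2: "xw = 0 \<Longrightarrow> yw = 3" "yw = 0 \<Longrightarrow> xw = 3"
    using n ij a unfolding xw_def yw_def ci_def ci2_def by (auto simp: min_def split: if_splits)
  have G: "\<And>k. 1 \<le> k \<Longrightarrow> k \<le> m+1 \<Longrightarrow> (if xv = k then 1 else 0) - (if yv = k then 1 else 0) = (if xw = k then 1 else 0) - (if yw = k then (1::int) else 0)"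
  proof -
    fix k :: int assume k: "1 \<le> k" "k \<le> m+1"
    show "?thesis k" using H[OF k] unfolding Fv_def xv_def yv_def xw_def yw_def by simp
  qed
  note F4 = G[of xv] and F5 = G[of yv] and F6 = G[of xw] and F7 = G[of yw] and F8 = G[of 3]
  have "(xv = xw \<and> yv = yw) \<or> (xv = yv \<and> xw = yw)"
    using F4 F5 F6 F7 F8 b z1 z2 n by smt
  then show ?thesis
  proof
    assume h: "xv = xw \<and> yv = yw"
    show ?thesis by (rule C1[of n i j]) (use h n ij in \<open>auto simp: xv_def xw_def yv_def yw_def\<close>)
  next
    assume h: "xv = yv \<and> xw = yw"
    show ?thesis by (rule C2[of n i j a]) (use h n ij a in \<open>auto simp: xv_def xw_def yv_def yw_def\<close>)
  qed
qed

definition vert :: "nat \<Rightarrow> nat\<times>nat" where "vert t = (t div 2, t mod 2)"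
definition tbl :: "nat \<Rightarrow> nat list list list" where
  "tbl n = map (\<lambda>t. map (\<lambda>k. filter (\<lambda>u. dd n (vert t) (vert u) = k) [0..<2*n]) [1..<n div 2 + 2]) [0..<2*n]"
definition sig2 :: "bool list \<Rightarrow> nat list list list \<Rightarrow> (nat \<times> nat) list list" where
  "sig2 bs T = map (map (\<lambda>l. (length l, length (filter (nth bs) l)))) T"

fun chk :: "nat list list list \<Rightarrow> bool list \<Rightarrow> nat \<Rightarrow> bool" where
  "chk T bs 0 = (\<not> distinct (sig2 bs T))"
| "chk T bs (Suc k) = (chk T (True#bs) k \<and> chk T (False#bs) k)"

lemma vstring_prism:
  assumes "n \<ge> 3" "v \<in> verts (prism n)"
  shows "vstring (prism n) F v = map (\<lambda>k. \<Sum>w\<in>{w \<in> verts (prism n). dd n v w = k}. F w) [1..<n div 2 + 2]"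
proof -
  have "\<And>k. {w \<in> verts (prism n). gdist (prism n) v w = k} = {w \<in> verts (prism n). dd n v w = k}"
    using gdist_prism[OF assms(2)] by auto
  then show ?thesis unfolding vstring_def diameter_prism[OF assms(1)] by simp
qed

lemma vert_inj: "inj vert"
proof (rule injI)
  fix s t assume "vert s = vert t"
  then have "s div 2 = t div 2" "s mod 2 = t mod 2" by (auto simp: vert_def)
  then show "s = t" by (metis div_mult_mod_eq)
qed

lemma vert_bij: "bij_betw vert {0..<2*n} (verts (prism n))"
proof (rule bij_betw_imageI)
  show "inj_on vert {0..<2*n}" using vert_inj by (simp add: inj_on_def inj_def)
  show "vert ` {0..<2*n} = verts (prism n)"
  proof
    show "vert ` {0..<2*n} \<subseteq> verts (prism n)"
      by (auto simp: vert_def verts_prism less_mult_imp_div_less)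
  next
    show "verts (prism n) \<subseteq> vert ` {0..<2*n}"
    proof
      fix w assume "w \<in> verts (prism n)"
      then obtain i a where w: "w = (i,a)" "i < n" "a < 2" by (auto simp: verts_prism)
      have "vert (2*i+a) = (i,a)" using w by (simp add: vert_def)
      moreover have "2*i+a \<in> {0..<2*n}" using w by simp
      ultimately show "w \<in> vert ` {0..<2*n}" using w by (metis image_eqI)
    qed
  qed
qed

lemma vert_in: "t < 2*n \<Longrightarrow> vert t \<in> verts (prism n)"
  using vert_bij[of n] by (auto simp: bij_betw_def)

lemma vert_surj: "w \<in> verts (prism n) \<Longrightarrow> \<exists>t<2*n. w = vert t"
proof -
  assume "w \<in> verts (prism n)"
  then have "w \<in> vert ` {0..<2*n}" using vert_bij[of n] by (simp add: bij_betw_def)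
  then obtain t where "t \<in> {0..<2*n}" "w = vert t" by blast
  then show ?thesis by auto
qed

lemma sum_sph_list:
  fixes F :: "nat \<times> nat \<Rightarrow> real"
  shows "(\<Sum>w\<in>{w \<in> verts (prism n). dd n v w = k}. F w) =
     sum_list (map (F \<circ> vert) (filter (\<lambda>u. dd n v (vert u) = k) [0..<2*n]))"
proof -
  have "sum_list (map (F \<circ> vert) (filter (\<lambda>u. dd n v (vert u) = k) [0..<2*n]))
      = sum (F \<circ> vert) (set (filter (\<lambda>u. dd n v (vert u) = k) [0..<2*n]))"
    by (simp add: sum_list_distinct_conv_sum_set)
  also have "set (filter (\<lambda>u. dd n v (vert u) = k) [0..<2*n]) = {u \<in> {0..<2*n}. dd n v (vert u) = k}"
    by auto
  also have "sum (F \<circ> vert) {u \<in> {0..<2*n}. dd n v (vert u) = k} = sum F (vert ` {u \<in> {0..<2*n}. dd n v (vert u) = k})"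
    by (rule sum.reindex[symmetric]) (use vert_inj in \<open>simp add: inj_on_def inj_def\<close>)
  also have "vert ` {u \<in> {0..<2*n}. dd n v (vert u) = k} = {w \<in> verts (prism n). dd n v w = k}"
  proof
    show "vert ` {u \<in> {0..<2*n}. dd n v (vert u) = k} \<subseteq> {w \<in> verts (prism n). dd n v w = k}"
      using vert_in by auto
  next
    show "{w \<in> verts (prism n). dd n v w = k} \<subseteq> vert ` {u \<in> {0..<2*n}. dd n v (vert u) = k}"
    proof
      fix w assume w: "w \<in> {w \<in> verts (prism n). dd n v w = k}"
      then obtain t where "t < 2*n" "w = vert t" using vert_surj by blast
      then show "w \<in> vert ` {u \<in> {0..<2*n}. dd n v (vert u) = k}" using w by auto
    qed
  qed
  finally show ?thesis by (simp add: comp_def)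
qed

lemma vstring_tbl:
  fixes F :: "nat \<times> nat \<Rightarrow> real"
  assumes "n \<ge> 3" "t < 2*n"
  shows "vstring (prism n) F (vert t) = map (\<lambda>l. sum_list (map (F \<circ> vert) l)) (tbl n ! t)"
proof -
  have "tbl n ! t = map (\<lambda>k. filter (\<lambda>u. dd n (vert t) (vert u) = k) [0..<2*n]) [1..<n div 2 + 2]"
    unfolding tbl_def using assms(2) by simp
  then show ?thesis unfolding vstring_prism[OF assms(1) vert_in[OF assms(2)]] sum_sph_list by simp
qed

lemma chk_correct: "chk T bs k \<Longrightarrow> length cs = k \<Longrightarrow> \<not> distinct (sig2 (rev cs @ bs) T)"
proof (induction k arbitrary: bs cs)
  case 0 then show ?case by simp
next
  case (Suc k)
  then obtain c cs' where cs: "cs = c # cs'" "length cs' = k" by (cases cs) auto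
  have "chk T (c#bs) k" using Suc.prems(1) by (cases c) auto
  then have "\<not> distinct (sig2 (rev cs' @ (c # bs)) T)" using Suc.IH cs(2) by blast
  then show ?case using cs by simp
qed

lemma sum_list_two:
  fixes G :: "nat \<Rightarrow> real"
  assumes "\<forall>u\<in>set l. u < length bs \<and> (bs ! u \<longleftrightarrow> G u = \<alpha>) \<and> (G u = \<alpha> \<or> G u = \<beta>)"
  shows "sum_list (map G l) = \<alpha> * real (length (filter (nth bs) l)) + \<beta> * (real (length l) - real (length (filter (nth bs) l)))"
  using assms
proof (induction l)
  case Nil then show ?case by simp
next
  case (Cons u l)
  then have IH: "sum_list (map G l) = \<alpha> * real (length (filter (nth bs) l)) + \<beta> * (real (length l) - real (length (filter (nth bs) l)))"
    by simp
  have u: "bs ! u \<longleftrightarrow> G u = \<alpha>" "G u = \<alpha> \<or> G u = \<beta>" using Cons.prems by auto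
  show ?case
  proof (cases "bs ! u")
    case True
    then show ?thesis using IH u by (simp add: algebra_simps)
  next
    case False
    then have "G u = \<beta>" using u by auto
    then show ?thesis using IH False by (simp add: algebra_simps)
  qed
qed

lemma tbl_elems: "t < 2*n \<Longrightarrow> l \<in> set (tbl n ! t) \<Longrightarrow> u \<in> set l \<Longrightarrow> u < 2*n"
  unfolding tbl_def by auto

lemma tbl_len: "length (tbl n) = 2*n"
  unfolding tbl_def by simp

lemma two_valued_fail:
  fixes F :: "nat \<times> nat \<Rightarrow> real"
  assumes n: "n \<ge> 3" and c: "chk (tbl n) [] (2*n)" and F: "F ` verts (prism n) = {\<alpha>, \<beta>}"
  shows "\<not> inj_on (vstring (prism n) F) (verts (prism n))"
proof
  assume inj: "inj_on (vstring (prism n) F) (verts (prism n))"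
  define bs where "bs = map (\<lambda>u. F (vert u) = \<alpha>) [0..<2*n]"
  have lbs: "length bs = 2*n" unfolding bs_def by simp
  have "\<not> distinct (sig2 (rev (rev bs) @ []) (tbl n))"
    by (rule chk_correct[OF c]) (simp add: lbs)
  then have nd: "\<not> distinct (sig2 bs (tbl n))" by simp
  have ls: "length (sig2 bs (tbl n)) = 2*n" unfolding sig2_def by (simp add: tbl_len)
  obtain t1 t2 where t: "t1 < 2*n" "t2 < 2*n" "t1 \<noteq> t2" "sig2 bs (tbl n) ! t1 = sig2 bs (tbl n) ! t2"
    using nd ls unfolding distinct_conv_nth by auto
  have key: "vstring (prism n) F (vert t) = map (\<lambda>p. \<alpha> * real (snd p) + \<beta> * (real (fst p) - real (snd p))) (sig2 bs (tbl n) ! t)"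
    if tt: "t < 2*n" for t
  proof -
    have "\<And>l. l \<in> set (tbl n ! t) \<Longrightarrow> sum_list (map (F \<circ> vert) l) = \<alpha> * real (length (filter (nth bs) l)) + \<beta> * (real (length l) - real (length (filter (nth bs) l)))"
    proof (rule sum_list_two, intro ballI conjI)
      fix l u assume l: "l \<in> set (tbl n ! t)" and u: "u \<in> set l"
      have ul: "u < 2*n" using tbl_elems[OF tt l u] .
      then show "u < length bs" using lbs by simp
      show "bs ! u \<longleftrightarrow> (F \<circ> vert) u = \<alpha>" using ul unfolding bs_def by simp
      have "F (vert u) \<in> {\<alpha>, \<beta>}" using F vert_in[OF ul] by blast
      then show "(F \<circ> vert) u = \<alpha> \<or> (F \<circ> vert) u = \<beta>" by auto
    qed
    then show ?thesis unfolding vstring_tbl[OF n tt] sig2_def using tt tbl_len[of n] by simp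
  qed
  have "vstring (prism n) F (vert t1) = vstring (prism n) F (vert t2)"
    using key[OF t(1)] key[OF t(2)] t(4) by simp
  then have "vert t1 = vert t2" using inj vert_in t(1,2) by (meson inj_onD)
  then show False using t(3) vert_inj by (meson injD)
qed

definition sigv :: "nat list \<Rightarrow> nat list list list \<Rightarrow> nat list list" where
  "sigv g T = map (map (\<lambda>l. sum_list (map (nth g) l))) T"

definition Fg :: "nat list \<Rightarrow> nat \<times> nat \<Rightarrow> real" where
  "Fg g w = real (g ! (2 * fst w + snd w))"

lemma Fg_vert: "Fg g (vert u) = real (g ! u)"
  unfolding Fg_def vert_def by simp

lemma sigv_inj:
  assumes n: "n \<ge> 3" and d: "distinct (sigv g (tbl n))"
  shows "inj_on (vstring (prism n) (Fg g)) (verts (prism n))"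
proof (rule inj_onI)
  fix v w assume v: "v \<in> verts (prism n)" and w: "w \<in> verts (prism n)"
    and e: "vstring (prism n) (Fg g) v = vstring (prism n) (Fg g) w"
  obtain t1 where t1: "t1 < 2*n" "v = vert t1" using vert_surj[OF v] by blast
  obtain t2 where t2: "t2 < 2*n" "w = vert t2" using vert_surj[OF w] by blast
  have key: "vstring (prism n) (Fg g) (vert t) = map real (sigv g (tbl n) ! t)" if tt: "t < 2*n" for t
  proof -
    have "sum_list (map (Fg g \<circ> vert) l) = real (sum_list (map (nth g) l))" for l :: "nat list"
      by (induction l) (simp_all add: Fg_vert)
    then show ?thesis unfolding vstring_tbl[OF n tt] sigv_def using tt tbl_len[of n] by simp
  qed
  have "map real (sigv g (tbl n) ! t1) = map real (sigv g (tbl n) ! t2)"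
    using e key[OF t1(1)] key[OF t2(1)] t1 t2 by simp
  then have "sigv g (tbl n) ! t1 = sigv g (tbl n) ! t2"
    by (simp add: inj_map_eq_map inj_on_def)
  moreover have "length (sigv g (tbl n)) = 2*n" unfolding sigv_def by (simp add: tbl_len)
  ultimately have "t1 = t2" using d t1(1) t2(1) by (simp add: nth_eq_iff_index_eq)
  then show "v = w" using t1 t2 by simp
qed

lemma Fg_image:
  assumes "length g = 2*n"
  shows "Fg g ` verts (prism n) = real ` set g"
proof -
  have "Fg g ` verts (prism n) = Fg g ` vert ` {0..<2*n}" using vert_bij[of n] by (simp add: bij_betw_def)
  also have "\<dots> = (\<lambda>u. real (g ! u)) ` {0..<2*n}" by (simp add: image_image Fg_vert)
  also have "\<dots> = real ` ((!) g ` {0..<length g})" using assms by (simp add: image_image)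
  also have "(!) g ` {0..<length g} = set g" by (metis list.set_map map_nth set_upt)
  finally show ?thesis .
qed

lemma verts_fin: "finite (verts (prism n))" by (simp add: verts_prism)

lemma sph_swap_card:
  "card {w \<in> verts (prism n). dd n (0,0) w = k} = card {w \<in> verts (prism n). dd n (0,1) w = k}"
proof -
  define \<sigma> where "\<sigma> = (\<lambda>w::nat\<times>nat. (fst w, 1 - snd w))"
  have inj: "inj_on \<sigma> {w \<in> verts (prism n). dd n (0,0) w = k}"
    by (rule inj_onI) (auto simp: \<sigma>_def verts_prism prod_eq_iff)
  have "\<sigma> ` {w \<in> verts (prism n). dd n (0,0) w = k} = {w \<in> verts (prism n). dd n (0,1) w = k}"
  proof
    show "\<sigma> ` {w \<in> verts (prism n). dd n (0,0) w = k} \<subseteq> {w \<in> verts (prism n). dd n (0,1) w = k}"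
      by (auto simp: \<sigma>_def verts_prism dd_def)
  next
    show "{w \<in> verts (prism n). dd n (0,1) w = k} \<subseteq> \<sigma> ` {w \<in> verts (prism n). dd n (0,0) w = k}"
    proof
      fix w assume w: "w \<in> {w \<in> verts (prism n). dd n (0,1) w = k}"
      then obtain j b where jb: "w = (j,b)" "j < n" "b < 2" by (auto simp: verts_prism)
      have "w = \<sigma> (j, 1 - b)" using jb by (auto simp: \<sigma>_def)
      moreover have "(j, 1-b) \<in> {w \<in> verts (prism n). dd n (0,0) w = k}"
        using w jb by (auto simp: verts_prism dd_def)
      ultimately show "w \<in> \<sigma> ` {w \<in> verts (prism n). dd n (0,0) w = k}" by blast
    qed
  qed
  then show ?thesis using card_image[OF inj] by simp
qed

lemma card_ge2:
  fixes F :: "nat \<times> nat \<Rightarrow> real"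
  assumes n: "n \<ge> 3" and inj: "inj_on (vstring (prism n) F) (verts (prism n))"
  shows "2 \<le> card (F ` verts (prism n))"
proof (rule ccontr)
  assume "\<not> 2 \<le> card (F ` verts (prism n))"
  moreover have "(0,0) \<in> verts (prism n)" "(0,1) \<in> verts (prism n)" using n by (auto simp: verts_prism)
  moreover have "finite (F ` verts (prism n))" by (simp add: verts_fin)
  ultimately have "card (F ` verts (prism n)) > 0" by (auto simp: card_gt_0_iff)
  with \<open>\<not> 2 \<le> card (F ` verts (prism n))\<close> have "card (F ` verts (prism n)) = 1" by linarith
  then obtain c where c: "F ` verts (prism n) = {c}" using card_1_singletonE by blast
  have s: "(\<Sum>w\<in>{w \<in> verts (prism n). dd n v w = k}. F w) = c * real (card {w \<in> verts (prism n). dd n v w = k})" for v k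
  proof -
    have "(\<Sum>w\<in>{w \<in> verts (prism n). dd n v w = k}. F w) = (\<Sum>w\<in>{w \<in> verts (prism n). dd n v w = k}. c)"
      by (rule sum.cong) (use c in auto)
    then show ?thesis by simp
  qed
  have v0: "(0,0) \<in> verts (prism n)" and v1: "(0,1) \<in> verts (prism n)" using n by (auto simp: verts_prism)
  have "vstring (prism n) F (0,0) = vstring (prism n) F (0,1)"
    unfolding vstring_prism[OF n v0] vstring_prism[OF n v1] s sph_swap_card ..
  then show False using inj v0 v1 by (metis inj_onD old.prod.inject zero_neq_one)
qed

definition F7 :: "nat \<times> nat \<Rightarrow> real" where
  "F7 w = (if snd w = 1 then (if fst w = 2 then 0 else 1) else (if fst w = 0 then 1 else 0))"

lemma layer1_card:
  assumes "i < n" "a < 2" "1 \<le> k"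
  shows "card {w \<in> verts (prism n). dd n (i,a) w = k \<and> snd w = 1} = (if a = 1 then rho n k else rho n (k-1))"
proof -
  have e: "{w \<in> verts (prism n). dd n (i,a) w = k \<and> snd w = 1} = (\<lambda>j. (j,1)) ` {j. j < n \<and> cd n i j = (if a = 1 then k else k-1)}"
    using assms by (auto simp: verts_prism dd_def)
  have "card {w \<in> verts (prism n). dd n (i,a) w = k \<and> snd w = 1} = card {j. j < n \<and> cd n i j = (if a = 1 then k else k-1)}"
    unfolding e by (rule card_image) (simp add: inj_on_def)
  then show ?thesis using card_cd[OF assms(1)] by simp
qed

lemma sum_F7:
  assumes n: "n \<ge> 4" and i: "i < n" "a < 2" "1 \<le> k"
  shows "(\<Sum>w\<in>{w \<in> verts (prism n). dd n (i,a) w = k}. F7 w) =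
     real (if a = 1 then rho n k else rho n (k-1)) + (if cd n i 0 + a = k then 1 else 0) - (if cd n i 2 + 1 - a = k then 1 else 0)"
proof -
  let ?A = "{w \<in> verts (prism n). dd n (i,a) w = k}"
  have fin: "finite ?A" by (simp add: verts_fin)
  have "(\<Sum>w\<in>?A. F7 w) = (\<Sum>w\<in>?A. (if snd w = 1 then 1 else 0) + ((if w = (0,0) then 1 else 0) - (if w = (2,1) then 1 else 0)))"
    by (rule sum.cong) (auto simp: F7_def verts_prism)
  also have "\<dots> = (\<Sum>w\<in>?A. (if snd w = 1 then 1 else 0)) + ((\<Sum>w\<in>?A. (if w = (0,0) then 1 else 0)) - (\<Sum>w\<in>?A. (if w = (2,1) then 1 else 0)))"
    by (simp add: sum.distrib sum_subtractf)
  also have "(\<Sum>w\<in>?A. (if snd w = 1 then 1 else 0::real)) = real (card {w \<in> ?A. snd w = 1})"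
    using fin by (simp add: sum.inter_filter[symmetric])
  also have "{w \<in> ?A. snd w = 1} = {w \<in> verts (prism n). dd n (i,a) w = k \<and> snd w = 1}" by auto
  also have "(\<Sum>w\<in>?A. (if w = (0,0) then 1 else 0::real)) = (if (0,0) \<in> ?A then 1 else 0)"
    using fin by (simp add: sum.delta)
  also have "(\<Sum>w\<in>?A. (if w = (2,1) then 1 else 0::real)) = (if (2,1) \<in> ?A then 1 else 0)"
    using fin by (simp add: sum.delta)
  also have "((0,0) \<in> ?A) = (cd n i 0 + a = k)" using n i by (auto simp: verts_prism dd_def)
  also have "((2,1) \<in> ?A) = (cd n i 2 + 1 - a = k)" using n i by (auto simp: verts_prism dd_def)
  finally show ?thesis using layer1_card[OF i] by simp
qed

lemma ci_bridge: "i < n \<Longrightarrow> int (cd n i 0) = ci (int n) (int i)"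
  unfolding cd_def ci_def by (cases "i = 0") (auto simp: min_def)

lemma ci2_bridge: "i < n \<Longrightarrow> n \<ge> 4 \<Longrightarrow> int (cd n i 2) = ci2 (int n) (int i)"
  unfolding cd_def ci2_def by (auto simp: min_def of_nat_diff)

lemma rho_bridge: "int (rho n t) = rhoi (int n) (int t)"
  unfolding rho_def rhoi_def by auto

lemma sum_F7_int:
  assumes n: "n \<ge> 4" and i: "i < n" "a < 2" "1 \<le> k"
  shows "(\<Sum>w\<in>{w \<in> verts (prism n). dd n (i,a) w = k}. F7 w) = of_int (Fv (int n) (int i) (int a) (int k))"
proof -
  have r: "int (if a = 1 then rho n k else rho n (k-1)) = (if int a = 1 then rhoi (int n) (int k) else rhoi (int n) (int k - 1))"
    using rho_bridge[of n k] rho_bridge[of n "k-1"] i by (auto simp: of_nat_diff)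
  have c1: "(cd n i 0 + a = k) = (ci (int n) (int i) + int a = int k)"
    using ci_bridge[OF i(1)] by linarith
  have c2: "(cd n i 2 + 1 - a = k) = (ci2 (int n) (int i) + 1 - int a = int k)"
    using ci2_bridge[OF i(1) n] i by linarith
  have "real (if a = 1 then rho n k else rho n (k-1)) = of_int (if int a = 1 then rhoi (int n) (int k) else rhoi (int n) (int k - 1))"
  proof -
    have "real (if a = 1 then rho n k else rho n (k-1)) = of_int (int (if a = 1 then rho n k else rho n (k-1)))"
      by (simp only: of_int_of_nat_eq)
    also have "\<dots> = of_int (if int a = 1 then rhoi (int n) (int k) else rhoi (int n) (int k - 1))"
      by (simp only: r)
    finally show ?thesis .
  qed
  then show ?thesis unfolding sum_F7[OF n i] Fv_def c1 c2 by simp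
qed

lemma inj7:
  assumes n: "n \<ge> 7"
  shows "inj_on (vstring (prism n) F7) (verts (prism n))"
proof (rule inj_onI)
  fix v w assume v: "v \<in> verts (prism n)" and w: "w \<in> verts (prism n)"
    and e: "vstring (prism n) F7 v = vstring (prism n) F7 w"
  obtain i a where vi: "v = (i,a)" "i < n" "a < 2" using v by (auto simp: verts_prism)
  obtain j b where wj: "w = (j,b)" "j < n" "b < 2" using w by (auto simp: verts_prism)
  have n3: "n \<ge> 3" "n \<ge> 4" using n by auto
  have e2: "\<forall>k\<in>set [1..<n div 2 + 2]. (\<Sum>u\<in>{u \<in> verts (prism n). dd n v u = k}. F7 u) = (\<Sum>u\<in>{u \<in> verts (prism n). dd n w u = k}. F7 u)"
    using e unfolding vstring_prism[OF n3(1) v] vstring_prism[OF n3(1) w] map_eq_conv .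
  define m where "m = int (n div 2)"
  have mn: "int n = 2*m \<or> int n = 2*m+1" unfolding m_def by linarith
  have H: "Fv (int n) (int i) (int a) k = Fv (int n) (int j) (int b) k" if k: "1 \<le> k" "k \<le> m+1" for k
  proof -
    have kk: "1 \<le> nat k" "nat k \<in> set [1..<n div 2 + 2]" using k unfolding m_def by auto
    have s: "(\<Sum>u\<in>{u \<in> verts (prism n). dd n v u = nat k}. F7 u) = (\<Sum>u\<in>{u \<in> verts (prism n). dd n w u = nat k}. F7 u)"
      using e2 kk(2) by blast
    have A1: "(\<Sum>u\<in>{u \<in> verts (prism n). dd n v u = nat k}. F7 u) = of_int (Fv (int n) (int i) (int a) (int (nat k)))"
      unfolding vi(1) by (rule sum_F7_int[OF n3(2) vi(2,3) kk(1)])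
    have A2: "(\<Sum>u\<in>{u \<in> verts (prism n). dd n w u = nat k}. F7 u) = of_int (Fv (int n) (int j) (int b) (int (nat k)))"
      unfolding wj(1) by (rule sum_F7_int[OF n3(2) wj(2,3) kk(1)])
    have "Fv (int n) (int i) (int a) (int (nat k)) = Fv (int n) (int j) (int b) (int (nat k))"
      using s unfolding A1 A2 by (simp only: of_int_eq_iff)
    moreover have "int (nat k) = k" using k by simp
    ultimately show ?thesis by simp
  qed
  have nn: "int n \<ge> 7" using n by simp
  have ij: "0 \<le> int i" "int i < int n" "0 \<le> int j" "int j < int n" using vi wj by auto
  have ab: "a = 0 \<or> a = 1" "b = 0 \<or> b = 1" using vi wj by auto
  have "a = b"
  proof (rule ccontr)
    assume "a \<noteq> b"
    then have "(a = 0 \<and> b = 1) \<or> (a = 1 \<and> b = 0)" using ab by auto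
    then show False
    proof
      assume "a = 0 \<and> b = 1"
      then show False using key_layers[OF nn mn ij] H by simp
    next
      assume "a = 1 \<and> b = 0"
      then show False using key_layers[OF nn mn ij(3,4,1,2)] H by simp
    qed
  qed
  moreover have "int i = int j"
    by (rule key_same[OF nn mn ij, of "int a"]) (use ab H \<open>a = b\<close> in auto)
  ultimately show "v = w" using vi wj by simp
qed

lemma F7_image: "n \<ge> 3 \<Longrightarrow> F7 ` verts (prism n) = {0, 1}"
proof
  assume "n \<ge> 3"
  show "F7 ` verts (prism n) \<subseteq> {0, 1}" by (auto simp: F7_def)
  have "F7 (0,0) = 1" "F7 (2,1) = 0" by (auto simp: F7_def)
  moreover have "(0,0) \<in> verts (prism n)" "(2,1) \<in> verts (prism n)" using \<open>n \<ge> 3\<close> by (auto simp: verts_prism)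
  ultimately show "{0, 1} \<subseteq> F7 ` verts (prism n)" by (metis empty_subsetI image_eqI insert_subset)
qed

lemma d3: "distinct (sigv [0,0,0,1,0,2] (tbl 3))" by code_simp
lemma d4: "distinct (sigv [0,0,0,0,0,1,2,1] (tbl 4))" by code_simp
lemma d5: "distinct (sigv [0,0,0,0,0,0,0,2,1,2] (tbl 5))" by code_simp
lemma d6: "distinct (sigv [0,0,0,0,0,1,1,0,1,0,1,1] (tbl 6))" by code_simp
lemma c3: "chk (tbl 3) [] 6" by code_simp
lemma c4: "chk (tbl 4) [] 8" by code_simp
lemma c5: "chk (tbl 5) [] 10" by code_simp

lemma small_lower:
  fixes F :: "nat \<times> nat \<Rightarrow> real"
  assumes n: "n \<ge> 3" and c: "chk (tbl n) [] (2*n)" and inj: "inj_on (vstring (prism n) F) (verts (prism n))"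
  shows "3 \<le> card (F ` verts (prism n))"
proof (rule ccontr)
  assume "\<not> 3 \<le> card (F ` verts (prism n))"
  then have "card (F ` verts (prism n)) = 2" using card_ge2[OF n inj] by linarith
  then obtain \<alpha> \<beta> where "F ` verts (prism n) = {\<alpha>, \<beta>}" by (meson card_2_iff)
  then show False using two_valued_fail[OF n c] inj by blast
qed

lemma IDI_eq:
  assumes "\<exists>F. card (F ` verts (prism n)) = x \<and> inj_on (vstring (prism n) F) (verts (prism n))"
    and "\<And>F. inj_on (vstring (prism n) F) (verts (prism n)) \<Longrightarrow> x \<le> card (F ` verts (prism n))"
  shows "IDI (prism n) = x"
  unfolding IDI_def
proof (rule Least_equality)
  show "\<exists>F. card (F ` verts (prism n)) = x \<and> inj_on (vstring (prism n) F) (verts (prism n))" by (rule assms(1))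
next
  fix y assume "\<exists>F :: nat \<times> nat \<Rightarrow> real. card (F ` verts (prism n)) = y \<and> inj_on (vstring (prism n) F) (verts (prism n))"
  then show "x \<le> y" using assms(2) by blast
qed

lemma IDI_small:
  assumes n: "n = 3 \<or> n = 4 \<or> n = 5"
  shows "IDI (prism n) = 3"
proof -
  have "\<exists>g. length g = 2*n \<and> distinct (sigv g (tbl n)) \<and> card (real ` set g) = 3"
    using n
  proof (elim disjE)
    assume "n = 3" then show ?thesis using d3 by (intro exI[of _ "[0,0,0,1,0,2]"]) (simp add: card_insert_if)
  next
    assume "n = 4" then show ?thesis using d4 by (intro exI[of _ "[0,0,0,0,0,1,2,1]"]) (simp add: card_insert_if)
  next
    assume "n = 5" then show ?thesis using d5 by (intro exI[of _ "[0,0,0,0,0,0,0,2,1,2]"]) (simp add: card_insert_if)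
  qed
  then obtain g where g: "length g = 2*n" "distinct (sigv g (tbl n))" "card (real ` set g) = 3"
    by blast
  have c: "chk (tbl n) [] (2*n)" using n c3 c4 c5 by auto
  have n3: "n \<ge> 3" using n by auto
  show ?thesis
  proof (rule IDI_eq)
    show "\<exists>F. card (F ` verts (prism n)) = 3 \<and> inj_on (vstring (prism n) F) (verts (prism n))"
      using sigv_inj[OF n3 g(2)] Fg_image[OF g(1)] g(3) by metis
  next
    fix F :: "nat \<times> nat \<Rightarrow> real"
    assume "inj_on (vstring (prism n) F) (verts (prism n))"
    then show "3 \<le> card (F ` verts (prism n))" by (rule small_lower[OF n3 c])
  qed
qed

lemma IDI_big:
  assumes n: "n \<ge> 6"
  shows "IDI (prism n) = 2"
proof (rule IDI_eq)
  show "\<exists>F. card (F ` verts (prism n)) = 2 \<and> inj_on (vstring (prism n) F) (verts (prism n))"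
  proof (cases "n = 6")
    case True
    define g :: "nat list" where "g = [0,0,0,0,0,1,1,0,1,0,1,1]"
    have "length g = 2*n" "card (real ` set g) = 2" using True by (simp_all add: g_def card_insert_if)
    note gg = this
    have d: "distinct (sigv g (tbl n))" using d6 True by (simp add: g_def)
    have "inj_on (vstring (prism n) (Fg g)) (verts (prism n))" by (rule sigv_inj[OF _ d]) (use n in simp)
    moreover have "card (Fg g ` verts (prism n)) = 2" using Fg_image[OF gg(1)] gg(2) by simp
    ultimately show ?thesis by blast
  next
    case False
    then have "n \<ge> 7" using n by simp
    then have "card (F7 ` verts (prism n)) = 2" "inj_on (vstring (prism n) F7) (verts (prism n))"
      using F7_image[of n] inj7[of n] by simp_all
    then show ?thesis by blast
  qed
next
  fix F :: "nat \<times> nat \<Rightarrow> real"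
  assume "inj_on (vstring (prism n) F) (verts (prism n))"
  then show "2 \<le> card (F ` verts (prism n))" using card_ge2 n by simp
qed

theorem mainTheorem6:
  fixes n :: nat
  assumes "n \<ge> 3"
  shows "(n \<ge> 6 \<longrightarrow> IDI (prism n) = 2) \<and> (n \<le> 5 \<longrightarrow> IDI (prism n) = 3)"
proof (intro conjI impI)
  assume "n \<ge> 6" then show "IDI (prism n) = 2" by (rule IDI_big)
next
  assume "n \<le> 5" then have "n = 3 \<or> n = 4 \<or> n = 5" using assms by auto
  then show "IDI (prism n) = 3" by (rule IDI_small)
qed

end
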